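(* Let $D$ be a division ring with center $F$ such that $D$ is algebraic over $F$. Let $V$ be a maximal subring of $F$ which is not a field, and let $x\in F\setminus V$. Suppose that $T=\{\alpha\in D: \alpha \text{ is integral over } V\}$ is a subring of $D$. Then $D$ has a maximal subring $W$ such that $T\subseteq W$, $x\notin W$ (in particular $x\notin T$), and $F\cap W=V$.
   Context: All rings are associative unital and subrings share the identity. A maximal subring of a ring $T$ is a proper subring maximal under inclusion among proper subrings of $T$. An element $\alpha\in D$ is integral over $V\subseteq F$ if it satisfies a monic polynomial with coefficients in $V$. *)

theory Defs
  imports Main
begin

definition is_subring :: "'a::ring_1 set \<Rightarrow> bool" where
  "is_subring S \<longleftrightarrow> 1 \<in> S \<and> (\<forall>a\<in>S. \<forall>b\<in>S. a - b \<in> S \<and> a * b \<in> S)"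

definition maximal_subring_of :: "'a::ring_1 set \<Rightarrow> 'a set \<Rightarrow> bool" where
  "maximal_subring_of S T \<longleftrightarrow> is_subring S \<and> S \<subset> T \<and>
     (\<forall>S'. is_subring S' \<and> S \<subseteq> S' \<and> S' \<subset> T \<longrightarrow> S' = S)"

definition center :: "'a::ring_1 set" where
  "center = {a. \<forall>b. a * b = b * a}"

definition algebraic_over :: "'a::ring_1 set \<Rightarrow> 'a \<Rightarrow> bool" where
  "algebraic_over F \<alpha> \<longleftrightarrow> (\<exists>n c. (\<forall>i\<le>n. c i \<in> F) \<and> (\<exists>i\<le>n. c i \<noteq> 0) \<and>
      (\<Sum>i\<le>n. c i * \<alpha> ^ i) = 0)"

definition integral_over :: "'a::ring_1 set \<Rightarrow> 'a \<Rightarrow> bool" where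
  "integral_over V \<alpha> \<longleftrightarrow> (\<exists>n c. (\<forall>i<n. c i \<in> V) \<and>
      \<alpha> ^ n + (\<Sum>i<n. c i * \<alpha> ^ i) = 0)"

definition is_subfield :: "'a::division_ring set \<Rightarrow> bool" where
  "is_subfield S \<longleftrightarrow> is_subring S \<and> (\<forall>a\<in>S. a \<noteq> 0 \<longrightarrow> inverse a \<in> S)"

end

theory Submission
  imports Defs
begin

lemma sr0: "is_subring S \<Longrightarrow> 0 \<in> S"
  unfolding is_subring_def by (metis diff_self)
lemma srneg: "is_subring S \<Longrightarrow> a \<in> S \<Longrightarrow> - a \<in> S"
proof -
  assume S: "is_subring S" and a: "a \<in> S"
  have "0 - a \<in> S" using S a sr0[OF S] unfolding is_subring_def by blast
  then show ?thesis by simp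
qed
lemma sradd: "is_subring S \<Longrightarrow> a \<in> S \<Longrightarrow> b \<in> S \<Longrightarrow> a + b \<in> S"
proof -
  assume S: "is_subring S" and a: "a \<in> S" and b: "b \<in> S"
  have "a - (- b) \<in> S" using S a srneg[OF S b] unfolding is_subring_def by blast
  then show ?thesis by simp
qed
lemma srmult: "is_subring S \<Longrightarrow> a \<in> S \<Longrightarrow> b \<in> S \<Longrightarrow> a * b \<in> S"
  unfolding is_subring_def by blast
lemma srdiff: "is_subring S \<Longrightarrow> a \<in> S \<Longrightarrow> b \<in> S \<Longrightarrow> a - b \<in> S"
  unfolding is_subring_def by blast
lemma sr1: "is_subring S \<Longrightarrow> 1 \<in> S"
  unfolding is_subring_def by blast
lemma srpow: "is_subring S \<Longrightarrow> a \<in> S \<Longrightarrow> a ^ n \<in> S"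
  by (induction n) (auto intro: sr1 srmult)
lemma srsum: "is_subring S \<Longrightarrow> (\<And>i. i \<in> A \<Longrightarrow> f i \<in> S) \<Longrightarrow> sum f A \<in> S"
proof (induction A rule: infinite_finite_induct)
  case (infinite A) then show ?case by (simp add: sr0)
next
  case empty then show ?case by (simp add: sr0)
next
  case (insert x F) then show ?case by (simp add: sradd)
qed

lemma center_subring: "is_subring (center :: 'a::ring_1 set)"
  unfolding is_subring_def
proof (intro conjI ballI)
  show "1 \<in> (center :: 'a set)" unfolding center_def by simp
next
  fix a c :: 'a assume "a \<in> center" "c \<in> center"
  then have a: "\<And>b. a * b = b * a" and c: "\<And>b. c * b = b * c" unfolding center_def by auto
  have "(a - c) * b = b * (a - c)" for b
  proof -
    have "(a - c) * b = a * b - c * b" by (rule left_diff_distrib)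
    also have "\<dots> = b * a - b * c" by (simp only: a c)
    also have "\<dots> = b * (a - c)" by (rule right_diff_distrib[symmetric])
    finally show ?thesis .
  qed
  then show "a - c \<in> center" unfolding center_def by blast
  have "(a * c) * b = b * (a * c)" for b
  proof -
    have "(a * c) * b = a * (c * b)" by (rule mult.assoc)
    also have "\<dots> = a * (b * c)" by (simp only: c)
    also have "\<dots> = (a * b) * c" by (rule mult.assoc[symmetric])
    also have "\<dots> = (b * a) * c" by (simp only: a)
    also have "\<dots> = b * (a * c)" by (rule mult.assoc)
    finally show ?thesis .
  qed
  then show "a * c \<in> center" unfolding center_def by blast
qed

lemma centerD: "a \<in> center \<Longrightarrow> a * b = b * a"
  unfolding center_def by blast

lemma center_inv: "(a::'a::division_ring) \<in> center \<Longrightarrow> inverse a \<in> center"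
  unfolding center_def
proof (clarsimp)
  fix b assume h: "\<forall>b. a * b = b * a"
  show "inverse a * b = b * inverse a"
  proof (cases "a = 0")
    case False
    have "inverse a * b = inverse a * (b * a) * inverse a" using False by (simp add: mult.assoc)
    also have "\<dots> = inverse a * (a * b) * inverse a" by (simp only: h[rule_format, of b, symmetric])
    also have "\<dots> = b * inverse a" using False by (simp add: mult.assoc[symmetric])
    finally show ?thesis .
  qed simp
qed

lemma cpow: "a \<in> center \<Longrightarrow> (a * b) ^ n = a ^ n * (b::'a::ring_1) ^ n"
proof (induction n)
  case (Suc n)
  have an: "a ^ n \<in> center" using Suc.prems center_subring srpow by blast
  then have ba: "b * a ^ n = a ^ n * b" using centerD[OF an, of b] by simp
  have "(a * b) ^ Suc n = (a * b) * (a ^ n * b ^ n)" using Suc by simp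
  also have "\<dots> = a * ((b * a ^ n) * b ^ n)" by (simp only: mult.assoc)
  also have "\<dots> = a * ((a ^ n * b) * b ^ n)" by (simp only: ba)
  also have "\<dots> = a ^ Suc n * b ^ Suc n" by (simp only: mult.assoc power_Suc)
  finally show ?case .
qed simp

lemma maxapp:
  assumes "maximal_subring_of V center" "is_subring S" "V \<subseteq> S" "S \<subseteq> center" "y \<in> S" "y \<notin> V"
  shows "S = center"
  using assms unfolding maximal_subring_of_def by blast

lemma inv_integral_in:
  fixes a :: "'a::division_ring"
  assumes V: "is_subring V" "V \<subseteq> center" and a: "a \<in> V" "a \<noteq> 0"
    and int: "integral_over V (inverse a)"
  shows "inverse a \<in> V"
proof -
  let ?b = "inverse a"
  obtain n c where c: "\<forall>i<n. c i \<in> V" and eq: "?b ^ n + (\<Sum>i<n. c i * ?b ^ i) = 0"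
    using int unfolding integral_over_def by blast
  have ac: "a \<in> center" using a V by blast
  have ab: "a * ?b = 1" using a by simp
  have abp: "a ^ i * ?b ^ i = 1" for i using cpow[OF ac, of ?b i] ab by simp
  show ?thesis
  proof (cases n)
    case 0 then show ?thesis using eq by simp
  next
    case (Suc k)
    have "a ^ k * (?b ^ n + (\<Sum>i<n. c i * ?b ^ i)) = 0" using eq by simp
    then have e: "a ^ k * ?b ^ n + (\<Sum>i<n. a ^ k * (c i * ?b ^ i)) = 0"
      by (simp add: distrib_left sum_distrib_left)
    have "a ^ k * ?b ^ n = ?b" using Suc abp[of k] by (simp add: power_Suc2 mult.assoc[symmetric] del: power_Suc)
    moreover have "a ^ k * (c i * ?b ^ i) = c i * a ^ (k - i)" if "i < n" for i
    proof -
      have ci: "c i \<in> center" using c that V by blast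
      have "a ^ k = a ^ (k - i) * a ^ i" using that Suc by (simp add: power_add[symmetric])
      then have "a ^ k * (c i * ?b ^ i) = a ^ (k - i) * (a ^ i * (c i * ?b ^ i))" by (simp add: mult.assoc)
      also have "\<dots> = a ^ (k - i) * (c i * (a ^ i * ?b ^ i))"
        using centerD[OF ci, of "a ^ i"] by (simp add: mult.assoc[symmetric])
      also have "\<dots> = c i * a ^ (k - i)" using abp[of i] centerD[OF ci, of "a ^ (k - i)"] by simp
      finally show ?thesis .
    qed
    ultimately have "?b + (\<Sum>i<n. c i * a ^ (k - i)) = 0" using e by simp
    then have "?b = - (\<Sum>i<n. c i * a ^ (k - i))" by (simp add: eq_neg_iff_add_eq_0)
    moreover have "(\<Sum>i<n. c i * a ^ (k - i)) \<in> V"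
      by (rule srsum[OF V(1)]) (use c a V in \<open>auto intro: srmult srpow\<close>)
    ultimately show ?thesis using srneg[OF V(1)] by simp
  qed
qed


lemma monic_from_alg:
  fixes \<alpha> :: "'a::division_ring"
  shows "(\<forall>i\<le>n. c i \<in> center) \<Longrightarrow> (\<exists>i\<le>n. c i \<noteq> 0) \<Longrightarrow> (\<Sum>i\<le>n. c i * \<alpha> ^ i) = 0 \<Longrightarrow>
    \<exists>m e. (\<forall>i<m. e i \<in> center) \<and> \<alpha> ^ m + (\<Sum>i<m. e i * \<alpha> ^ i) = 0"
proof (induction n)
  case 0 then show ?case by simp
next
  case (Suc n)
  show ?case
  proof (cases "c (Suc n) = 0")
    case True
    then have "\<exists>i\<le>n. c i \<noteq> 0" using Suc.prems(2) le_Suc_eq by auto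
    moreover have "(\<Sum>i\<le>n. c i * \<alpha> ^ i) = 0" using Suc.prems(3) True by simp
    ultimately show ?thesis using Suc by simp
  next
    case False
    define g where "g = inverse (c (Suc n))"
    have "g * (\<Sum>i\<le>Suc n. c i * \<alpha> ^ i) = 0" using Suc.prems(3) by simp
    moreover have "(\<Sum>i\<le>Suc n. c i * \<alpha> ^ i) = (\<Sum>i<Suc n. c i * \<alpha> ^ i) + c (Suc n) * \<alpha> ^ Suc n"
      by (simp only: sum.atMost_Suc lessThan_Suc_atMost)
    ultimately have "g * (c (Suc n) * \<alpha> ^ Suc n) + (\<Sum>i<Suc n. g * (c i * \<alpha> ^ i)) = 0"
      by (simp only: sum_distrib_left distrib_left add.commute)
    then have "\<alpha> ^ Suc n + (\<Sum>i<Suc n. (g * c i) * \<alpha> ^ i) = 0"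
      using False by (simp add: g_def mult.assoc[symmetric])
    moreover have "\<forall>i<Suc n. g * c i \<in> center"
    proof (intro allI impI)
      fix i assume "i < Suc n"
      then have ci: "c i \<in> center" using Suc.prems(1) by simp
      have gc: "g \<in> center" unfolding g_def using Suc.prems(1) center_inv by blast
      show "g * c i \<in> center" using srmult[OF center_subring gc ci] .
    qed
    ultimately show ?thesis by (intro exI[of _ "Suc n"] exI[of _ "\<lambda>i. g * c i"]) simp
  qed
qed

lemma scale_integral:
  fixes \<alpha> d :: "'a::division_ring"
  assumes d: "d \<in> center" and eq: "\<alpha> ^ m + (\<Sum>i<m. e i * \<alpha> ^ i) = 0"
  shows "(d * \<alpha>) ^ m + (\<Sum>i<m. (d ^ (m - i) * e i) * (d * \<alpha>) ^ i) = 0"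
proof -
  have dp: "d ^ k \<in> center" for k using d srpow center_subring by blast
  have "(d * \<alpha>) ^ m + (\<Sum>i<m. (d ^ (m - i) * e i) * (d * \<alpha>) ^ i)
      = d ^ m * \<alpha> ^ m + (\<Sum>i<m. d ^ m * (e i * \<alpha> ^ i))"
  proof -
    have key: "(d ^ (m - i) * e i) * (d * \<alpha>) ^ i = d ^ m * (e i * \<alpha> ^ i)" if "i < m" for i
    proof -
      have "(d ^ (m - i) * e i) * (d * \<alpha>) ^ i = d ^ (m - i) * (e i * (d ^ i * \<alpha> ^ i))"
        by (simp add: cpow[OF d] mult.assoc)
      also have "\<dots> = d ^ (m - i) * (d ^ i * (e i * \<alpha> ^ i))"
        using centerD[OF dp[of i], of "e i"] by (simp add: mult.assoc[symmetric])
      also have "\<dots> = d ^ m * (e i * \<alpha> ^ i)" using that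
        by (simp add: mult.assoc[symmetric] power_add[symmetric])
      finally show ?thesis .
    qed
    have "(\<Sum>i<m. (d ^ (m - i) * e i) * (d * \<alpha>) ^ i) = (\<Sum>i<m. d ^ m * (e i * \<alpha> ^ i))"
      by (rule sum.cong) (simp_all add: key)
    moreover have "(d * \<alpha>) ^ m = d ^ m * \<alpha> ^ m" by (rule cpow[OF d])
    ultimately show ?thesis by simp
  qed
  also have "\<dots> = d ^ m * (\<alpha> ^ m + (\<Sum>i<m. e i * \<alpha> ^ i))"
    by (simp add: distrib_left sum_distrib_left)
  also have "\<dots> = 0" using eq by simp
  finally show ?thesis .
qed

lemma common_denom:
  fixes V :: "'a::division_ring set" and m :: nat
  assumes V: "is_subring V" "V \<subseteq> center"
    and Q: "\<forall>c\<in>center. \<exists>b\<in>V. b \<noteq> 0 \<and> b * c \<in> V"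
  shows "(\<forall>i<m. e i \<in> center) \<Longrightarrow> \<exists>d\<in>V. d \<noteq> 0 \<and> (\<forall>i<m. d * e i \<in> V)"
proof (induction m)
  case 0 then show ?case using sr1[OF V(1)] by (intro bexI[of _ 1]) auto
next
  case (Suc m)
  then obtain d where d: "d \<in> V" "d \<noteq> 0" "\<forall>i<m. d * e i \<in> V" by auto
  obtain b where b: "b \<in> V" "b \<noteq> 0" "b * e m \<in> V" using Q Suc.prems by auto
  have "\<forall>i<Suc m. (b * d) * e i \<in> V"
  proof (intro allI impI)
    fix i assume "i < Suc m"
    then consider "i < m" | "i = m" by linarith
    then show "(b * d) * e i \<in> V"
    proof cases
      case 1 then show ?thesis using d b srmult[OF V(1)] by (simp add: mult.assoc)
    next
      case 2
      have "d \<in> center" using d V by blast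
      then have "b * d = d * b" using centerD[of d b] by simp
      then have "(b * d) * e m = d * (b * e m)" by (simp add: mult.assoc)
      then show ?thesis using 2 d b srmult[OF V(1)] by simp
    qed
  qed
  moreover have "b * d \<in> V" "b * d \<noteq> 0" using b d srmult[OF V(1)] by auto
  ultimately show ?case by blast
qed


theorem proposition3p1:
  fixes V :: "'a::division_ring set" and x :: 'a
  assumes alg: "\<forall>\<alpha>::'a. algebraic_over center \<alpha>"
    and maxV: "maximal_subring_of V center"
    and notfield: "\<not> is_subfield V"
    and x: "x \<in> center" "x \<notin> V"
    and T: "is_subring {\<alpha>::'a. integral_over V \<alpha>}"
  shows "\<exists>W. maximal_subring_of W (UNIV :: 'a set) \<and>
           {\<alpha>. integral_over V \<alpha>} \<subseteq> W \<and> x \<notin> W \<and> center \<inter> W = V"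
proof -
  define TT where "TT = {\<alpha>::'a. integral_over V \<alpha>}"
  have Vsr: "is_subring V" and VF: "V \<subseteq> center" using maxV unfolding maximal_subring_of_def by auto
  have VT: "V \<subseteq> TT"
  proof
    fix v assume "v \<in> V"
    then have "v ^ 1 + (\<Sum>i<1. (- v) * v ^ i) = 0" "- v \<in> V"
      using srneg[OF Vsr] by auto
    then show "v \<in> TT" unfolding TT_def integral_over_def
      by (intro CollectI exI[of _ 1] exI[of _ "\<lambda>_. - v"]) simp
  qed
  obtain a where a: "a \<in> V" "a \<noteq> 0" "inverse a \<notin> V"
    using notfield Vsr unfolding is_subfield_def by blast
  have Fsr: "is_subring (center::'a set)" by (rule center_subring)
  have fill: "center \<subseteq> S" if "is_subring S" "TT \<subseteq> S" "x \<in> S" for S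
  proof -
    have "is_subring (S \<inter> center)" using that(1) Fsr unfolding is_subring_def by auto
    then have "S \<inter> center = center" using maxapp[OF maxV, of "S \<inter> center" x] that VT VF x by auto
    then show ?thesis by blast
  qed
  have xT: "x \<notin> TT"
  proof
    assume "x \<in> TT"
    then have "center \<subseteq> TT" using fill T TT_def by blast
    moreover have "inverse a \<in> center" using a VF center_inv by blast
    ultimately have "inverse a \<in> V" using inv_integral_in[OF Vsr VF a(1,2)] TT_def by blast
    then show False using a by blast
  qed
  have Q: "\<forall>c\<in>center. \<exists>b\<in>V. b \<noteq> 0 \<and> b * c \<in> V"
  proof -
    define Q where "Q = {c \<in> center. \<exists>b\<in>V. b \<noteq> 0 \<and> b * c \<in> V}"
    have "is_subring Q"
      unfolding is_subring_def
    proof (intro conjI ballI)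
      show "1 \<in> Q" unfolding Q_def using sr1[OF Vsr] sr1[OF Fsr] by force
    next
      fix c c' assume "c \<in> Q" "c' \<in> Q"
      then obtain b b' where bb: "b \<in> V" "b \<noteq> 0" "b * c \<in> V" "b' \<in> V" "b' \<noteq> 0" "b' * c' \<in> V"
        and cc: "c \<in> center" "c' \<in> center"
        unfolding Q_def by auto
      have bc: "b \<in> center" "b' \<in> center" using bb VF by auto
      have nz: "b * b' \<noteq> 0" using bb by simp
      have bbV: "b * b' \<in> V" using bb srmult[OF Vsr] by simp
      have bb': "b * b' = b' * b" by (rule centerD[OF bc(1)])
      have f1: "(b * b') * c = b' * (b * c)" by (simp only: bb' mult.assoc)
      have f2: "(b * b') * c' = b * (b' * c')" by (simp only: mult.assoc)
      have e1: "(b * b') * (c - c') = b' * (b * c) - b * (b' * c')"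
        by (simp only: right_diff_distrib f1 f2)
      have "(b * b') * (c * c') = b * ((b' * c) * c')" by (simp add: mult.assoc)
      also have "\<dots> = b * ((c * b') * c')" using centerD[OF cc(1), of b'] by simp
      also have "\<dots> = (b * c) * (b' * c')" by (simp add: mult.assoc)
      finally have e2: "(b * b') * (c * c') = (b * c) * (b' * c')" .
      have "b' * (b * c) - b * (b' * c') \<in> V"
        by (rule srdiff[OF Vsr srmult[OF Vsr bb(4) bb(3)] srmult[OF Vsr bb(1) bb(6)]])
      then have m1: "(b * b') * (c - c') \<in> V" using e1 by simp
      have "(b * c) * (b' * c') \<in> V" by (rule srmult[OF Vsr bb(3) bb(6)])
      then have m2: "(b * b') * (c * c') \<in> V" using e2 by simp
      show "c - c' \<in> Q" unfolding Q_def using srdiff[OF Fsr cc] nz bbV m1 by blast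
      show "c * c' \<in> Q" unfolding Q_def using srmult[OF Fsr cc] nz bbV m2 by blast
    qed
    moreover have "V \<subseteq> Q" unfolding Q_def using VF sr1[OF Vsr] by force
    moreover have "inverse a \<in> Q"
    proof -
      have "inverse a \<in> center" using a VF center_inv by blast
      moreover have "a * inverse a \<in> V" using a sr1[OF Vsr] by simp
      ultimately show ?thesis unfolding Q_def using a by blast
    qed
    moreover have "Q \<subseteq> center" unfolding Q_def by blast
    ultimately have "Q = center" using maxapp[OF maxV, of Q "inverse a"] a by blast
    then show ?thesis unfolding Q_def by blast
  qed
  have full: "S = UNIV" if S: "is_subring S" "TT \<subseteq> S" "x \<in> S" for S
  proof -
    have FS: "center \<subseteq> S" using fill S by blast
    have "\<alpha> \<in> S" for \<alpha>
    proof -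
      obtain n c where "\<forall>i\<le>n. c i \<in> center" "\<exists>i\<le>n. c i \<noteq> 0" "(\<Sum>i\<le>n. c i * \<alpha> ^ i) = 0"
        using alg unfolding algebraic_over_def by blast
      then obtain m e where e: "\<forall>i<m. e i \<in> center" "\<alpha> ^ m + (\<Sum>i<m. e i * \<alpha> ^ i) = 0"
        using monic_from_alg by blast
      obtain d where d: "d \<in> V" "d \<noteq> 0" "\<forall>i<m. d * e i \<in> V"
        using common_denom[OF Vsr VF Q e(1)] by blast
      have dc: "d \<in> center" using d VF by blast
      have "(d * \<alpha>) ^ m + (\<Sum>i<m. (d ^ (m - i) * e i) * (d * \<alpha>) ^ i) = 0"
        by (rule scale_integral[OF dc e(2)])
      moreover have "\<forall>i<m. d ^ (m - i) * e i \<in> V"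
      proof (intro allI impI)
        fix i assume i: "i < m"
        then have mi: "m - i = Suc (m - Suc i)" by simp
        have "d ^ (m - i) * e i = d ^ (m - Suc i) * (d * e i)"
          unfolding mi by (simp add: power_Suc2 mult.assoc del: power_Suc)
        moreover have "d ^ (m - Suc i) * (d * e i) \<in> V"
          using d i by (intro srmult[OF Vsr srpow[OF Vsr]]) auto
        ultimately show "d ^ (m - i) * e i \<in> V" by simp
      qed
      ultimately have "d * \<alpha> \<in> TT" unfolding TT_def integral_over_def
        by (intro CollectI exI[of _ m] exI[of _ "\<lambda>i. d ^ (m - i) * e i"]) simp
      then have "d * \<alpha> \<in> S" using S by blast
      moreover have "inverse d \<in> S" using FS center_inv dc by blast
      ultimately have "inverse d * (d * \<alpha>) \<in> S" using srmult[OF S(1)] by blast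
      then show ?thesis using d(2) by (simp add: mult.assoc[symmetric])
    qed
    then show ?thesis by blast
  qed
  define A where "A = {S. is_subring S \<and> TT \<subseteq> S \<and> x \<notin> S}"
  have "\<exists>M\<in>A. \<forall>X\<in>A. M \<subseteq> X \<longrightarrow> X = M"
  proof (rule subset_Zorn_nonempty)
    show "A \<noteq> {}" using T xT unfolding A_def TT_def by blast
  next
    fix C assume C: "C \<noteq> {}" "subset.chain A C"
    have CA: "C \<subseteq> A" and ch: "\<forall>X\<in>C. \<forall>Y\<in>C. X \<subseteq> Y \<or> Y \<subseteq> X"
      using C(2) unfolding subset.chain_def by auto
    have "is_subring (\<Union>C)"
      unfolding is_subring_def
    proof (intro conjI ballI)
      show "1 \<in> \<Union>C" using C(1) CA unfolding A_def is_subring_def by blast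
    next
      fix p q assume "p \<in> \<Union>C" "q \<in> \<Union>C"
      then obtain X Y where XY: "X \<in> C" "Y \<in> C" "p \<in> X" "q \<in> Y" by blast
      then have "\<exists>Z\<in>C. p \<in> Z \<and> q \<in> Z" using ch by blast
      then obtain Z where Z: "Z \<in> C" "p \<in> Z" "q \<in> Z" by blast
      then have "is_subring Z" using CA unfolding A_def by blast
      then show "p - q \<in> \<Union>C" "p * q \<in> \<Union>C" using Z unfolding is_subring_def by blast+
    qed
    moreover have "TT \<subseteq> \<Union>C" using C(1) CA unfolding A_def by blast
    moreover have "x \<notin> \<Union>C" using CA unfolding A_def by blast
    ultimately show "\<Union>C \<in> A" unfolding A_def by blast
  qed
  then obtain W where W: "W \<in> A" and Wmax: "\<forall>X\<in>A. W \<subseteq> X \<longrightarrow> X = W" by blast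
  have Wsr: "is_subring W" and TW: "TT \<subseteq> W" and xW: "x \<notin> W" using W unfolding A_def by auto
  have "maximal_subring_of W UNIV"
    unfolding maximal_subring_of_def
  proof (intro conjI allI impI)
    show "is_subring W" by (rule Wsr)
    show "W \<subset> UNIV" using xW by blast
  next
    fix S' assume S': "is_subring S' \<and> W \<subseteq> S' \<and> S' \<subset> UNIV"
    show "S' = W"
    proof (cases "x \<in> S'")
      case True
      then have "S' = UNIV" using full[of S'] S' TW by blast
      then show ?thesis using S' by blast
    next
      case False
      then have "S' \<in> A" using S' TW unfolding A_def by blast
      then show ?thesis using Wmax S' by blast
    qed
  qed
  moreover have "center \<inter> W = V"
  proof -
    have "is_subring (center \<inter> W)" using Wsr Fsr unfolding is_subring_def by auto
    moreover have "V \<subseteq> center \<inter> W" using VF VT TW by blast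
    moreover have "center \<inter> W \<subset> center" using x xW by blast
    ultimately show ?thesis using maxV unfolding maximal_subring_of_def by blast
  qed
  ultimately show ?thesis using TW xW unfolding TT_def by blast
qed

end
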